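(* Let $|\Psi\rangle=|\Psi'\rangle\otimes|\Phi\rangle$, where $|\Psi'\rangle$ and $|\Phi\rangle$ are $M$-party stabilizer states (each party $\alpha$ holding some qubits of each), and suppose the stabilizer group $S_\Phi$ of $|\Phi\rangle$ satisfies $S_\Phi=\sum_{\alpha\in M}(S_\Phi)_{\hat\alpha}$. Then $\Gamma(\Psi)=\{\rho'\otimes|\Phi\rangle\langle\Phi|:\ \rho'\in\Gamma(\Psi')\}$.
   Context: Let $G^n\cong\mathbb{F}_2^{2n}$, with elements $f=(a_1,b_1,\dots,a_n,b_n)$; $\sigma_{00}=I,\sigma_{10}=\sigma^x,\sigma_{01}=\sigma^z,\sigma_{11}=\sigma^y$, $\sigma(f)=\sigma_{a_1b_1}\otimes\cdots\otimes\sigma_{a_nb_n}$; symplectic form $\omega(f,f')=\sum_j(a_jb_j'+b_ja_j')\bmod 2$. A stabilizer state with stabilizer group $S$ ($S$ self-dual, i.e. $S=\{f:\omega(f,g)=0\ \forall g\in S\}$) is the unique up-to-phase unit vector with $\sigma(f)|\Psi\rangle=\epsilon(f)|\Psi\rangle$ for all $f\in S$ for fixed consistent signs. In the $M$-party setting, party $\alpha$ holds $n_\alpha$ qubits; $f_\alpha$ is the restriction of $f$ to party $\alpha$'s qubits; co-local subgroup $S_{\hat\alpha}=\{g\in S:g_\alpha=0\}$. For an $M$-party pure state $|\Psi\rangle$, $\Gamma(\Psi)$ is the set of density operators $\rho$ on the same qubits with $\mathrm{Tr}_\alpha\rho=\mathrm{Tr}_\alpha|\Psi\rangle\langle\Psi|$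 for all $\alpha\in M$, $\mathrm{Tr}_\alpha$ being the partial trace over all qubits of party $\alpha$. *)

theory Defs
  imports Complex_Main "HOL-Library.Z2"
begin

text \<open>A computational basis configuration of a
finite set Q of qubits is a function nat => bool vanishing outside Q. Vectors
(state vectors) and operators (matrices) on the qubits Q are complex-valued functions on
configurations (resp. pairs of configurations), required to vanish outside Q.\<close>

type_synonym cfg = "nat \<Rightarrow> bool"
type_synonym qvec = "cfg \<Rightarrow> complex"
type_synonym qop = "cfg \<Rightarrow> cfg \<Rightarrow> complex"
text \<open>An element f of G^n: f j = (a_j, b_j) in F_2 x F_2.\<close>
type_synonym pauli_label = "nat \<Rightarrow> bit \<times> bit"

definition qbasis :: "nat set \<Rightarrow> cfg set" where
  "qbasis Q = {x. \<forall>i. i \<notin> Q \<longrightarrow> \<not> x i}"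

definition restr :: "cfg \<Rightarrow> nat set \<Rightarrow> cfg" where
  "restr x Q = (\<lambda>i. i \<in> Q \<and> x i)"

definition merge :: "cfg \<Rightarrow> cfg \<Rightarrow> cfg" where
  "merge x z = (\<lambda>i. x i \<or> z i)"

definition is_vec :: "nat set \<Rightarrow> qvec \<Rightarrow> bool" where
  "is_vec Q \<psi> \<longleftrightarrow> (\<forall>x. x \<notin> qbasis Q \<longrightarrow> \<psi> x = 0)"

definition is_op :: "nat set \<Rightarrow> qop \<Rightarrow> bool" where
  "is_op Q \<rho> \<longleftrightarrow> (\<forall>x y. x \<notin> qbasis Q \<or> y \<notin> qbasis Q \<longrightarrow> \<rho> x y = 0)"

definition unit_vec :: "nat set \<Rightarrow> qvec \<Rightarrow> bool" where
  "unit_vec Q \<psi> \<longleftrightarrow> is_vec Q \<psi> \<and> (\<Sum>x\<in>qbasis Q. (cmod (\<psi> x))\<^sup>2) = 1"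

definition proj :: "qvec \<Rightarrow> qop" where
  "proj \<psi> = (\<lambda>x y. \<psi> x * cnj (\<psi> y))"

definition density :: "nat set \<Rightarrow> qop \<Rightarrow> bool" where
  "density Q \<rho> \<longleftrightarrow> is_op Q \<rho> \<and>
     (\<forall>v::qvec. Im (\<Sum>x\<in>qbasis Q. \<Sum>y\<in>qbasis Q. cnj (v x) * \<rho> x y * v y) = 0 \<and>
                Re (\<Sum>x\<in>qbasis Q. \<Sum>y\<in>qbasis Q. cnj (v x) * \<rho> x y * v y) \<ge> 0) \<and>
     (\<Sum>x\<in>qbasis Q. \<rho> x x) = 1"

definition ptrace :: "nat set \<Rightarrow> nat set \<Rightarrow> qop \<Rightarrow> qop" where
  "ptrace Q A \<rho> = (\<lambda>x y. if x \<in> qbasis (Q - A) \<and> y \<in> qbasis (Q - A)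
      then (\<Sum>z\<in>qbasis (Q \<inter> A). \<rho> (merge x z) (merge y z)) else 0)"

definition tensor_vec :: "nat set \<Rightarrow> nat set \<Rightarrow> qvec \<Rightarrow> qvec \<Rightarrow> qvec" where
  "tensor_vec Q1 Q2 \<psi> \<phi> = (\<lambda>x. if x \<in> qbasis (Q1 \<union> Q2)
      then \<psi> (restr x Q1) * \<phi> (restr x Q2) else 0)"

definition tensor_op :: "nat set \<Rightarrow> nat set \<Rightarrow> qop \<Rightarrow> qop \<Rightarrow> qop" where
  "tensor_op Q1 Q2 \<rho> \<sigma> = (\<lambda>x y. if x \<in> qbasis (Q1 \<union> Q2) \<and> y \<in> qbasis (Q1 \<union> Q2)
      then \<rho> (restr x Q1) (restr y Q1) * \<sigma> (restr x Q2) (restr y Q2) else 0)"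

text \<open>Pauli labels supported on Q, symplectic form, and the action of sigma(f).
  sigma_{ab}|x> = i^{ab} (-1)^{b x} |x + a>, which gives I, X, Z, Y for ab = 00, 10, 01, 11.\<close>
definition pauli_on :: "nat set \<Rightarrow> pauli_label \<Rightarrow> bool" where
  "pauli_on Q f \<longleftrightarrow> (\<forall>j. j \<notin> Q \<longrightarrow> f j = (0, 0))"

definition symp :: "nat set \<Rightarrow> pauli_label \<Rightarrow> pauli_label \<Rightarrow> bit" where
  "symp Q f g = (\<Sum>j\<in>Q. fst (f j) * snd (g j) + snd (f j) * fst (g j))"

definition pauli_apply :: "nat set \<Rightarrow> pauli_label \<Rightarrow> qvec \<Rightarrow> qvec" where
  "pauli_apply Q f \<psi> = (\<lambda>y. if y \<in> qbasis Q then
      (let x = (\<lambda>i. i \<in> Q \<and> (y i \<noteq> (fst (f i) = 1))) in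
        (\<Prod>j\<in>Q. (if fst (f j) = 1 \<and> snd (f j) = 1 then \<i> else 1) *
                 (if snd (f j) = 1 \<and> x j then -1 else 1)) * \<psi> x)
      else 0)"

definition stabilizer_state :: "nat set \<Rightarrow> pauli_label set \<Rightarrow> qvec \<Rightarrow> bool" where
  "stabilizer_state Q S \<psi> \<longleftrightarrow>
     unit_vec Q \<psi> \<and>
     S = {f. pauli_on Q f \<and> (\<forall>g\<in>S. symp Q f g = 0)} \<and>
     (\<exists>\<epsilon>::pauli_label \<Rightarrow> complex. \<forall>f\<in>S. \<epsilon> f \<in> {1, -1} \<and>
         pauli_apply Q f \<psi> = (\<lambda>x. \<epsilon> f * \<psi> x))"

text \<open>Multi-party structure: owner j is the party holding qubit j.\<close>
definition party_qubits :: "(nat \<Rightarrow> 'p) \<Rightarrow> nat set \<Rightarrow> 'p \<Rightarrow> nat set" where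
  "party_qubits owner Q \<alpha> = {j \<in> Q. owner j = \<alpha>}"

definition colocal :: "(nat \<Rightarrow> 'p) \<Rightarrow> 'p \<Rightarrow> pauli_label set \<Rightarrow> pauli_label set" where
  "colocal owner \<alpha> S = {g \<in> S. \<forall>j. owner j = \<alpha> \<longrightarrow> g j = (0, 0)}"

definition subgroup_sum :: "'p set \<Rightarrow> ('p \<Rightarrow> pauli_label set) \<Rightarrow> pauli_label set" where
  "subgroup_sum M T = {(\<lambda>j. (\<Sum>\<alpha>\<in>M. fst (g \<alpha> j), \<Sum>\<alpha>\<in>M. snd (g \<alpha> j))) | g.
       \<forall>\<alpha>\<in>M. g \<alpha> \<in> T \<alpha>}"

definition Gamma :: "(nat \<Rightarrow> 'p) \<Rightarrow> 'p set \<Rightarrow> nat set \<Rightarrow> qvec \<Rightarrow> qop set" where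
  "Gamma owner M Q \<psi> = {\<rho>. density Q \<rho> \<and>
     (\<forall>\<alpha>\<in>M. ptrace Q (party_qubits owner Q \<alpha>) \<rho> =
             ptrace Q (party_qubits owner Q \<alpha>) (proj \<psi>))}"

end

theory Submission
  imports Defs
begin


lemma finite_qbasis: "finite Q \<Longrightarrow> finite (qbasis Q)"
proof -
  assume "finite Q"
  have "qbasis Q \<subseteq> (\<lambda>S i. i \<in> S) ` Pow Q"
  proof
    fix x assume "x \<in> qbasis Q"
    then have "x = (\<lambda>i. i \<in> {j. x j})" and "{j. x j} \<in> Pow Q" by (auto simp: qbasis_def)
    then show "x \<in> (\<lambda>S i. i \<in> S) ` Pow Q" by blast
  qed
  then show ?thesis using \<open>finite Q\<close> finite_subset by blast
qed

lemma merge_in: "x \<in> qbasis A \<Longrightarrow> z \<in> qbasis B \<Longrightarrow> merge x z \<in> qbasis (A \<union> B)"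
  by (auto simp: qbasis_def merge_def)

lemma sum_qbasis_split:
  assumes "A \<inter> B = {}"
  shows "(\<Sum>x\<in>qbasis (A \<union> B). F x) = (\<Sum>x\<in>qbasis A. \<Sum>z\<in>qbasis B. F (merge x z))"
proof -
  have bij: "bij_betw (\<lambda>(x,z). merge x z) (qbasis A \<times> qbasis B) (qbasis (A \<union> B))"
  proof (rule bij_betw_byWitness[where f'="\<lambda>X. (restr X A, restr X B)"])
    show "\<forall>a\<in>qbasis A \<times> qbasis B. (restr (case a of (x, z) \<Rightarrow> merge x z) A, restr (case a of (x, z) \<Rightarrow> merge x z) B) = a"
      using assms by (fastforce simp: qbasis_def merge_def restr_def fun_eq_iff)
    show "\<forall>a'\<in>qbasis (A \<union> B). (case (restr a' A, restr a' B) of (x, z) \<Rightarrow> merge x z) = a'"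
      by (fastforce simp: qbasis_def merge_def restr_def fun_eq_iff)
    show "(\<lambda>(x, z). merge x z) ` (qbasis A \<times> qbasis B) \<subseteq> qbasis (A \<union> B)"
      by (auto simp: qbasis_def merge_def)
    show "(\<lambda>X. (restr X A, restr X B)) ` qbasis (A \<union> B) \<subseteq> qbasis A \<times> qbasis B"
      by (auto simp: qbasis_def restr_def)
  qed
  have "(\<Sum>x\<in>qbasis A. \<Sum>z\<in>qbasis B. F (merge x z)) = (\<Sum>(x,z)\<in>qbasis A \<times> qbasis B. F (merge x z))"
    by (rule sum.cartesian_product)
  also have "\<dots> = (\<Sum>X\<in>qbasis (A \<union> B). F X)"
    using sum.reindex_bij_betw[OF bij, of F] by (simp add: case_prod_unfold)
  finally show ?thesis by simp
qed



definition pflip :: "nat set \<Rightarrow> pauli_label \<Rightarrow> cfg \<Rightarrow> cfg" where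
  "pflip Q f y = (\<lambda>i. i \<in> Q \<and> (y i \<noteq> (fst (f i) = 1)))"

definition gam :: "bit \<times> bit \<Rightarrow> bool \<Rightarrow> complex" where
  "gam ab p = (if fst ab = 1 \<and> snd ab = 1 then \<i> else 1) * (if snd ab = 1 \<and> p then -1 else 1)"

definition pcoef :: "nat set \<Rightarrow> pauli_label \<Rightarrow> cfg \<Rightarrow> complex" where
  "pcoef Q f y = (\<Prod>j\<in>Q. gam (f j) (pflip Q f y j))"

lemma pauli_apply_eq:
  "pauli_apply Q f v y = (if y \<in> qbasis Q then pcoef Q f y * v (pflip Q f y) else 0)"
  by (simp add: pauli_apply_def pcoef_def pflip_def gam_def Let_def)

lemma pflip_in: "pflip Q f y \<in> qbasis Q"
  by (simp add: pflip_def qbasis_def)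

lemma pflip_invol: "y \<in> qbasis Q \<Longrightarrow> pflip Q f (pflip Q f y) = y"
  by (auto simp: pflip_def qbasis_def fun_eq_iff)

lemma pflip_comm: "pflip Q f (pflip Q g y) = pflip Q g (pflip Q f y)"
  by (auto simp: pflip_def fun_eq_iff)

lemma gam_flip: "gam ab p = cnj (gam ab (p \<noteq> (fst ab = 1)))"
  by (cases "fst ab"; cases "snd ab"; cases p) (simp_all add: gam_def)

lemma gam_norm: "cnj (gam ab p) * gam ab p = 1"
  by (cases "fst ab"; cases "snd ab"; cases p) (simp_all add: gam_def)

lemma pcoef_flip: "pcoef Q f (pflip Q f y) = cnj (pcoef Q f y)"
proof -
  have "pcoef Q f (pflip Q f y) = (\<Prod>j\<in>Q. cnj (gam (f j) (pflip Q f y j)))"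
    unfolding pcoef_def
    by (rule prod.cong, simp, subst gam_flip, simp add: pflip_def)
  then show ?thesis by (simp add: pcoef_def)
qed

lemma pcoef_norm: "cnj (pcoef Q f y) * pcoef Q f y = 1"
  by (simp add: pcoef_def flip: prod.distrib add: gam_norm)

lemma sum_pflip: "(\<Sum>y\<in>qbasis Q. F (pflip Q f y)) = (\<Sum>y\<in>qbasis Q. F y)"
proof -
  have "bij_betw (pflip Q f) (qbasis Q) (qbasis Q)"
    by (rule bij_betw_byWitness[where f'="pflip Q f"]) (auto simp: pflip_invol pflip_in)
  then show ?thesis using sum.reindex_bij_betw by blast
qed

lemma pauli_herm:
  "(\<Sum>y\<in>qbasis Q. cnj (u y) * pauli_apply Q f v y) = (\<Sum>y\<in>qbasis Q. cnj (pauli_apply Q f u y) * v y)"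
proof -
  have "(\<Sum>y\<in>qbasis Q. cnj (u y) * pauli_apply Q f v y) = (\<Sum>y\<in>qbasis Q. cnj (u y) * pcoef Q f y * v (pflip Q f y))"
    by (rule sum.cong) (auto simp: pauli_apply_eq)
  also have "\<dots> = (\<Sum>y\<in>qbasis Q. cnj (u (pflip Q f y)) * pcoef Q f (pflip Q f y) * v (pflip Q f (pflip Q f y)))"
    by (rule sum_pflip[symmetric])
  also have "\<dots> = (\<Sum>y\<in>qbasis Q. cnj (pauli_apply Q f u y) * v y)"
    by (rule sum.cong) (auto simp: pauli_apply_eq pflip_invol pcoef_flip pflip_in)
  finally show ?thesis .
qed

lemma gam_comm:
  "gam (a1,b1) (p \<noteq> (a1 = 1)) * gam (a2,b2) ((p \<noteq> (a1 = 1)) \<noteq> (a2 = 1)) =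
   (if a1 * b2 + b1 * a2 = 1 then -1 else 1) * (gam (a2,b2) (p \<noteq> (a2 = 1)) * gam (a1,b1) ((p \<noteq> (a2 = 1)) \<noteq> (a1 = 1)))"
  by (cases a1; cases b1; cases a2; cases b2; cases p) (simp_all add: gam_def)

lemma prod_sign: "finite Q \<Longrightarrow> (\<Prod>j\<in>Q. (if w j = (1::bit) then -1 else 1::complex)) = (if sum w Q = 1 then -1 else 1)"
proof (induction Q rule: finite_induct)
  case empty then show ?case by simp
next
  case (insert x F)
  then show ?case by (cases "w x"; cases "sum w F") simp_all
qed

lemma pauli_comm:
  assumes "finite Q"
  shows "pauli_apply Q f (pauli_apply Q g v) y =
     (if symp Q f g = 1 then -1 else 1) * pauli_apply Q g (pauli_apply Q f v) y"
proof (cases "y \<in> qbasis Q")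
  case True
  have "pcoef Q f y * pcoef Q g (pflip Q f y) =
      (\<Prod>j\<in>Q. gam (f j) (pflip Q f y j) * gam (g j) (pflip Q g (pflip Q f y) j))"
    by (simp add: pcoef_def prod.distrib)
  also have "\<dots> = (\<Prod>j\<in>Q. (if fst (f j) * snd (g j) + snd (f j) * fst (g j) = 1 then -1 else 1) *
        (gam (g j) (pflip Q g y j) * gam (f j) (pflip Q f (pflip Q g y) j)))"
  proof (rule prod.cong)
    fix j assume "j \<in> Q"
    then show "gam (f j) (pflip Q f y j) * gam (g j) (pflip Q g (pflip Q f y) j) =
      (if fst (f j) * snd (g j) + snd (f j) * fst (g j) = 1 then -1 else 1) *
        (gam (g j) (pflip Q g y j) * gam (f j) (pflip Q f (pflip Q g y) j))"
      using gam_comm[of "fst (f j)" "snd (f j)" "y j" "fst (g j)" "snd (g j)"]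
      by (simp add: pflip_def)
  qed simp
  also have "\<dots> = (if symp Q f g = 1 then -1 else 1) * (pcoef Q g y * pcoef Q f (pflip Q g y))"
    by (simp only: prod.distrib pcoef_def prod_sign[OF assms] symp_def)
  finally have "pcoef Q f y * pcoef Q g (pflip Q f y) =
     (if symp Q f g = 1 then -1 else 1) * (pcoef Q g y * pcoef Q f (pflip Q g y))" .
  then show ?thesis using True
    by (simp add: pauli_apply_eq pflip_in pflip_comm[of Q f g] mult.assoc)
qed (simp add: pauli_apply_eq)



lemma merge_commute: "merge x z = merge z x"
  by (auto simp: merge_def fun_eq_iff)

lemma restr_merge1: "A \<inter> B = {} \<Longrightarrow> x \<in> qbasis A \<Longrightarrow> z \<in> qbasis B \<Longrightarrow> restr (merge x z) A = x"
  by (auto simp: restr_def merge_def qbasis_def fun_eq_iff)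

lemma restr_merge2: "A \<inter> B = {} \<Longrightarrow> x \<in> qbasis A \<Longrightarrow> z \<in> qbasis B \<Longrightarrow> restr (merge x z) B = z"
  by (auto simp: restr_def merge_def qbasis_def fun_eq_iff)

lemma merge_restr: "y \<in> qbasis (A \<union> B) \<Longrightarrow> merge (restr y A) (restr y B) = y"
  by (auto simp: restr_def merge_def qbasis_def fun_eq_iff)

lemma restr_in: "restr y A \<in> qbasis A"
  by (auto simp: restr_def qbasis_def)

lemma pauli_apply_merge:
  assumes "finite A" "finite B" "A \<inter> B = {}" "\<forall>j\<in>A. f j = (0,0)" "x \<in> qbasis B" "z \<in> qbasis A"
  shows "pauli_apply (A \<union> B) f v (merge x z) = pauli_apply B f (\<lambda>x'. v (merge x' z)) x"
proof -
  have fl: "pflip (A \<union> B) f (merge x z) = merge (pflip B f x) z"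
    using assms(3-6) by (auto simp: pflip_def merge_def qbasis_def fun_eq_iff) (metis fst_conv)
  have "pcoef (A \<union> B) f (merge x z) = (\<Prod>j\<in>A. gam (f j) (pflip (A \<union> B) f (merge x z) j)) *
       (\<Prod>j\<in>B. gam (f j) (pflip (A \<union> B) f (merge x z) j))"
    unfolding pcoef_def using assms(1-3) by (rule prod.union_disjoint)
  also have "(\<Prod>j\<in>A. gam (f j) (pflip (A \<union> B) f (merge x z) j)) = 1"
    using assms(4) by (intro prod.neutral) (simp add: gam_def)
  also have "(\<Prod>j\<in>B. gam (f j) (pflip (A \<union> B) f (merge x z) j)) = pcoef B f x"
    unfolding pcoef_def fl using assms(3,6)
    by (intro prod.cong) (auto simp: merge_def qbasis_def)
  finally have pc: "pcoef (A \<union> B) f (merge x z) = pcoef B f x" by simp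
  have "merge x z \<in> qbasis (A \<union> B)" using assms(5,6) by (auto simp: qbasis_def merge_def)
  then show ?thesis using assms(5) by (simp add: pauli_apply_eq fl pc)
qed

definition tr_pauli :: "nat set \<Rightarrow> pauli_label \<Rightarrow> qop \<Rightarrow> complex" where
  "tr_pauli Q g \<rho> = (\<Sum>x\<in>qbasis Q. pauli_apply Q g (\<lambda>z. \<rho> z x) x)"

lemma tr_pauli_ptrace:
  assumes "finite Q" "\<forall>j\<in>A. g j = (0,0)"
  shows "tr_pauli Q g \<rho> = tr_pauli (Q - A) g (ptrace Q A \<rho>)"
proof -
  have QU: "Q = (Q \<inter> A) \<union> (Q - A)" by blast
  have QU': "(Q - A) \<union> (Q \<inter> A) = Q" by blast
  have fin1: "finite (Q \<inter> A)" and fin2: "finite (Q - A)" using assms(1) by auto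
  have "tr_pauli Q g \<rho> = (\<Sum>x\<in>qbasis ((Q - A) \<union> (Q \<inter> A)). pauli_apply Q g (\<lambda>z. \<rho> z x) x)"
    unfolding tr_pauli_def by (simp only: QU')
  also have "\<dots> = (\<Sum>x\<in>qbasis (Q - A). \<Sum>z\<in>qbasis (Q \<inter> A).
       pauli_apply Q g (\<lambda>w. \<rho> w (merge x z)) (merge x z))"
    by (rule sum_qbasis_split) blast
  also have "\<dots> = (\<Sum>x\<in>qbasis (Q - A). \<Sum>z\<in>qbasis (Q \<inter> A).
       pcoef (Q - A) g x * \<rho> (merge (pflip (Q - A) g x) z) (merge x z))"
  proof (intro sum.cong refl)
    fix x z assume x: "x \<in> qbasis (Q - A)" and z: "z \<in> qbasis (Q \<inter> A)"
    have "pauli_apply ((Q \<inter> A) \<union> (Q - A)) g (\<lambda>w. \<rho> w (merge x z)) (merge x z) =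
        pauli_apply (Q - A) g (\<lambda>x'. \<rho> (merge x' z) (merge x z)) x"
      by (rule pauli_apply_merge[OF fin1 fin2 _ _ x z]) (use assms(2) in auto)
    then show "pauli_apply Q g (\<lambda>w. \<rho> w (merge x z)) (merge x z) =
       pcoef (Q - A) g x * \<rho> (merge (pflip (Q - A) g x) z) (merge x z)"
      using x QU by (simp add: pauli_apply_eq)
  qed
  also have "\<dots> = tr_pauli (Q - A) g (ptrace Q A \<rho>)"
    unfolding tr_pauli_def
    by (intro sum.cong refl) (simp add: pauli_apply_eq ptrace_def pflip_in sum_distrib_left)
  finally show ?thesis .
qed

lemma tensor_vec_merge:
  "Q1 \<inter> Q2 = {} \<Longrightarrow> x \<in> qbasis Q1 \<Longrightarrow> z \<in> qbasis Q2 \<Longrightarrow> tensor_vec Q1 Q2 \<psi> \<phi> (merge x z) = \<psi> x * \<phi> z"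
  by (simp add: tensor_vec_def merge_in restr_merge1 restr_merge2)

lemma tensor_op_merge:
  "Q1 \<inter> Q2 = {} \<Longrightarrow> x \<in> qbasis Q1 \<Longrightarrow> z \<in> qbasis Q2 \<Longrightarrow> y \<in> qbasis Q1 \<Longrightarrow> w \<in> qbasis Q2 \<Longrightarrow>
   tensor_op Q1 Q2 \<rho> \<sigma> (merge x z) (merge y w) = \<rho> x y * \<sigma> z w"
  by (simp add: tensor_op_def merge_in restr_merge1 restr_merge2)

lemma pauli_tensor:
  assumes "finite Q1" "finite Q2" "Q1 \<inter> Q2 = {}" "pauli_on Q2 t"
  shows "pauli_apply (Q1 \<union> Q2) t (tensor_vec Q1 Q2 \<psi> \<phi>) = tensor_vec Q1 Q2 \<psi> (pauli_apply Q2 t \<phi>)"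
proof
  fix y
  show "pauli_apply (Q1 \<union> Q2) t (tensor_vec Q1 Q2 \<psi> \<phi>) y = tensor_vec Q1 Q2 \<psi> (pauli_apply Q2 t \<phi>) y"
  proof (cases "y \<in> qbasis (Q1 \<union> Q2)")
    case True
    define x z where "x = restr y Q2" and "z = restr y Q1"
    have x: "x \<in> qbasis Q2" and z: "z \<in> qbasis Q1" by (auto simp: x_def z_def restr_in)
    have y: "y = merge x z" using True merge_restr[of y Q2 Q1] by (simp add: x_def z_def Un_commute)
    have dis: "Q2 \<inter> Q1 = {}" using assms(3) by blast
    have "pauli_apply (Q1 \<union> Q2) t (tensor_vec Q1 Q2 \<psi> \<phi>) y =
        pauli_apply Q2 t (\<lambda>x'. tensor_vec Q1 Q2 \<psi> \<phi> (merge x' z)) x"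
      unfolding y
      by (rule pauli_apply_merge[OF assms(1,2,3) _ x z]) (use assms(3,4) in \<open>auto simp: pauli_on_def\<close>)
    also have "\<dots> = pcoef Q2 t x * (\<psi> z * \<phi> (pflip Q2 t x))"
      using x z assms(3) pflip_in[of Q2 t x]
      by (simp add: pauli_apply_eq merge_commute[of _ z] tensor_vec_merge)
    also have "\<dots> = tensor_vec Q1 Q2 \<psi> (pauli_apply Q2 t \<phi>) y"
      unfolding y merge_commute[of x z] using x z assms(3) by (simp add: tensor_vec_merge pauli_apply_eq)
    finally show ?thesis .
  qed (simp add: pauli_apply_eq tensor_vec_def)
qed

lemma unit_sum: "unit_vec Q \<Psi> \<Longrightarrow> (\<Sum>x\<in>qbasis Q. \<Psi> x * cnj (\<Psi> x)) = 1"
proof -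
  assume u: "unit_vec Q \<Psi>"
  have "(\<Sum>x\<in>qbasis Q. \<Psi> x * cnj (\<Psi> x)) = (\<Sum>x\<in>qbasis Q. complex_of_real ((cmod (\<Psi> x))\<^sup>2))"
    by (intro sum.cong refl) (simp only: complex_norm_square)
  also have "\<dots> = complex_of_real (\<Sum>x\<in>qbasis Q. (cmod (\<Psi> x))\<^sup>2)" by simp
  also have "\<dots> = 1" using u by (simp add: unit_vec_def)
  finally show ?thesis .
qed

lemma tr_pauli_proj:
  assumes "unit_vec Q \<Psi>" "pauli_apply Q t \<Psi> = (\<lambda>x. e * \<Psi> x)"
  shows "tr_pauli Q t (proj \<Psi>) = e"
proof -
  have "tr_pauli Q t (proj \<Psi>) = (\<Sum>x\<in>qbasis Q. pauli_apply Q t \<Psi> x * cnj (\<Psi> x))"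
    unfolding tr_pauli_def proj_def by (intro sum.cong refl) (simp add: pauli_apply_eq)
  also have "\<dots> = e * (\<Sum>x\<in>qbasis Q. \<Psi> x * cnj (\<Psi> x))"
    by (simp add: assms(2) sum_distrib_left mult.assoc)
  finally show ?thesis using unit_sum[OF assms(1)] by simp
qed

lemma unit_tensor:
  assumes "Q1 \<inter> Q2 = {}" "unit_vec Q1 \<psi>" "unit_vec Q2 \<phi>"
  shows "unit_vec (Q1 \<union> Q2) (tensor_vec Q1 Q2 \<psi> \<phi>)"
proof -
  have "(\<Sum>x\<in>qbasis (Q1 \<union> Q2). (cmod (tensor_vec Q1 Q2 \<psi> \<phi> x))\<^sup>2) =
     (\<Sum>x\<in>qbasis Q1. \<Sum>z\<in>qbasis Q2. (cmod (tensor_vec Q1 Q2 \<psi> \<phi> (merge x z)))\<^sup>2)"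
    using assms(1) by (rule sum_qbasis_split)
  also have "\<dots> = (\<Sum>x\<in>qbasis Q1. \<Sum>z\<in>qbasis Q2. (cmod (\<psi> x))\<^sup>2 * (cmod (\<phi> z))\<^sup>2)"
    using assms(1) by (intro sum.cong refl) (simp add: tensor_vec_merge norm_mult power_mult_distrib)
  also have "\<dots> = (\<Sum>x\<in>qbasis Q1. (cmod (\<psi> x))\<^sup>2) * (\<Sum>z\<in>qbasis Q2. (cmod (\<phi> z))\<^sup>2)"
    by (simp add: sum_product)
  also have "\<dots> = 1" using assms(2,3) by (simp add: unit_vec_def)
  finally show ?thesis by (simp add: unit_vec_def is_vec_def tensor_vec_def)
qed



definition Bf :: "nat set \<Rightarrow> qop \<Rightarrow> qvec \<Rightarrow> qvec \<Rightarrow> complex" where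
  "Bf Q \<rho> v u = (\<Sum>x\<in>qbasis Q. \<Sum>y\<in>qbasis Q. cnj (v x) * \<rho> x y * u y)"

definition delta :: "cfg \<Rightarrow> qvec" where
  "delta a = (\<lambda>z. if z = a then 1 else 0)"

lemma density_B: "density Q \<rho> \<Longrightarrow> Im (Bf Q \<rho> v v) = 0 \<and> Re (Bf Q \<rho> v v) \<ge> 0"
  by (simp add: density_def Bf_def)

lemma B_add:
  "Bf Q \<rho> (\<lambda>x. u x + t * v x) (\<lambda>x. u x + t * v x) =
     Bf Q \<rho> u u + cnj t * Bf Q \<rho> v u + t * Bf Q \<rho> u v + cnj t * t * Bf Q \<rho> v v"
proof -
  have "Bf Q \<rho> (\<lambda>x. u x + t * v x) (\<lambda>x. u x + t * v x) =
    (\<Sum>x\<in>qbasis Q. \<Sum>y\<in>qbasis Q. cnj (u x) * \<rho> x y * u y + cnj t * (cnj (v x) * \<rho> x y * u y)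
       + t * (cnj (u x) * \<rho> x y * v y) + cnj t * t * (cnj (v x) * \<rho> x y * v y))"
    unfolding Bf_def by (intro sum.cong refl) (simp add: algebra_simps)
  also have "\<dots> = Bf Q \<rho> u u + cnj t * Bf Q \<rho> v u + t * Bf Q \<rho> u v + cnj t * t * Bf Q \<rho> v v"
    by (simp add: Bf_def sum.distrib sum_distrib_left)
  finally show ?thesis .
qed

lemma cnj_mult_self: "cnj z * z = complex_of_real ((cmod z)^2)"
  by (metis complex_norm_square mult.commute)

lemma sum_delta_r: "finite S \<Longrightarrow> (\<Sum>y\<in>S. f y * delta b y) = (if b \<in> S then f b else 0)"
proof -
  assume "finite S"
  have h: "(\<lambda>y. f y * delta b y) = (\<lambda>y. if y = b then f b else 0)" by (rule ext) (simp add: delta_def)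
  show ?thesis unfolding h using \<open>finite S\<close> by simp
qed

lemma sum_delta_l: "finite S \<Longrightarrow> (\<Sum>y\<in>S. cnj (delta b y) * f y) = (if b \<in> S then f b else 0)"
proof -
  assume "finite S"
  have h: "(\<lambda>y. cnj (delta b y) * f y) = (\<lambda>y. if y = b then f b else 0)" by (rule ext) (simp add: delta_def)
  show ?thesis unfolding h using \<open>finite S\<close> by simp
qed

lemma B_delta:
  assumes "finite Q" "a \<in> qbasis Q" "b \<in> qbasis Q"
  shows "Bf Q \<rho> (delta a) (delta b) = \<rho> a b"
  using assms by (simp add: Bf_def sum_delta_r sum_delta_l finite_qbasis)

lemma B_herm:
  assumes "density Q \<rho>"
  shows "Bf Q \<rho> u v = cnj (Bf Q \<rho> v u)"
proof -
  have h1: "Im (Bf Q \<rho> u u + cnj t * Bf Q \<rho> v u + t * Bf Q \<rho> u v + cnj t * t * Bf Q \<rho> v v) = 0" for t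
    using density_B[OF assms, of "\<lambda>x. u x + t * v x"] by (simp only: B_add)
  have iu: "Im (Bf Q \<rho> u u) = 0" and iv: "Im (Bf Q \<rho> v v) = 0" using density_B[OF assms] by auto
  have a: "Im (Bf Q \<rho> v u) + Im (Bf Q \<rho> u v) = 0" using h1[of 1] iu iv by simp
  have b: "Re (Bf Q \<rho> u v) - Re (Bf Q \<rho> v u) = 0" using h1[of \<i>] iu iv by simp
  show ?thesis using a b by (simp add: complex_eq_iff)
qed

lemma rho_herm:
  assumes "finite Q" "density Q \<rho>"
  shows "\<rho> x y = cnj (\<rho> y x)"
proof (cases "x \<in> qbasis Q \<and> y \<in> qbasis Q")
  case True
  then show ?thesis using B_herm[OF assms(2), of "delta x" "delta y"] B_delta[OF assms(1)] by simp
next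
  case False
  then have "\<rho> x y = 0" "\<rho> y x = 0" using assms(2) by (auto simp: density_def is_op_def)
  then show ?thesis by simp
qed

lemma B_null:
  assumes "finite Q" "density Q \<rho>" "Bf Q \<rho> u u = 0" "a \<in> qbasis Q"
  shows "(\<Sum>b\<in>qbasis Q. \<rho> a b * u b) = 0"
proof -
  have X0: "Bf Q \<rho> v u = 0" for v
  proof (rule ccontr)
    assume nz: "Bf Q \<rho> v u \<noteq> 0"
    define X where "X = Bf Q \<rho> v u"
    define N where "N = (cmod X)\<^sup>2"
    define R where "R = Re (Bf Q \<rho> v v)"
    define r where "r = 1 / (R + 1)"
    have Npos: "N > 0" using nz by (simp add: N_def X_def)
    have R0: "R \<ge> 0" using density_B[OF assms(2)] by (simp add: R_def)
    have iv: "Im (Bf Q \<rho> v v) = 0" using density_B[OF assms(2)] by simp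
    have r0: "r > 0" using R0 by (simp add: r_def)
    have rR: "r * R \<le> 1" using R0 by (simp add: r_def field_simps)
    have cX: "Bf Q \<rho> u v = cnj X" unfolding X_def by (rule B_herm[OF assms(2)])
    define t where "t = - (complex_of_real r * X)"
    have XX: "X * cnj X = complex_of_real N" by (simp only: N_def complex_norm_square)
    have Bvv: "Bf Q \<rho> v v = complex_of_real R" using iv by (simp add: R_def complex_eq_iff)
    have "Bf Q \<rho> (\<lambda>x. u x + t * v x) (\<lambda>x. u x + t * v x) =
       cnj t * X + t * cnj X + cnj t * t * complex_of_real R"
      by (simp add: B_add assms(3) cX Bvv X_def)
    also have "\<dots> = complex_of_real (- 2 * r * N + r * r * N * R)"
      unfolding t_def by (simp add: algebra_simps XX[symmetric])
    finally have e: "Re (Bf Q \<rho> (\<lambda>x. u x + t * v x) (\<lambda>x. u x + t * v x)) = - 2 * r * N + r * r * N * R"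
      by simp
    have "- 2 * r * N + r * r * N * R = r * N * (r * R - 2)" by (simp add: algebra_simps)
    also have "\<dots> < 0" using r0 Npos rR by (intro mult_pos_neg) auto
    finally show False using e density_B[OF assms(2)] by (metis not_le)
  qed
  define v where "v = (\<lambda>a. \<Sum>b\<in>qbasis Q. \<rho> a b * u b)"
  have "0 = Bf Q \<rho> v u" using X0 by simp
  also have "\<dots> = (\<Sum>x\<in>qbasis Q. cnj (v x) * v x)"
    unfolding Bf_def by (intro sum.cong refl) (simp add: v_def sum_distrib_left mult.assoc)
  also have "\<dots> = complex_of_real (\<Sum>x\<in>qbasis Q. (cmod (v x))\<^sup>2)"
    by (simp only: cnj_mult_self of_real_sum)
  finally have "(\<Sum>x\<in>qbasis Q. (cmod (v x))\<^sup>2) = 0" by (metis of_real_eq_0_iff)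
  then have "\<forall>x\<in>qbasis Q. (cmod (v x))\<^sup>2 = 0"
    by (subst sum_nonneg_eq_0_iff[symmetric]) (auto simp: finite_qbasis assms(1))
  then show ?thesis using assms(4) by (simp add: v_def)
qed



lemma stab_from_tr:
  assumes fin: "finite Q" and den: "density Q \<rho>" and e: "e = 1 \<or> e = -1"
    and tr: "tr_pauli Q t \<rho> = e"
  shows "pauli_apply Q t (\<lambda>x. \<rho> x y) = (\<lambda>x. e * \<rho> x y)"
proof -
  define c where "c = pcoef Q t"
  define p where "p = pflip Q t"
  have ee: "e * e = 1" and ce: "cnj e = e" using e by auto
  have pin: "p x \<in> qbasis Q" for x by (simp add: p_def pflip_in)
  have trc: "(\<Sum>x\<in>qbasis Q. c x * \<rho> (p x) x) = e"
    using tr unfolding tr_pauli_def by (simp add: pauli_apply_eq c_def p_def)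
  have tr1: "(\<Sum>x\<in>qbasis Q. \<rho> x x) = 1" using den by (simp add: density_def)
  have tr2: "(\<Sum>x\<in>qbasis Q. \<rho> (p x) (p x)) = 1"
    using tr1 sum_pflip[of "\<lambda>x. \<rho> x x" Q t] by (simp add: p_def)
  have S2: "(\<Sum>x\<in>qbasis Q. cnj (c x) * \<rho> x (p x)) = e"
  proof -
    have "(\<Sum>x\<in>qbasis Q. cnj (c x) * \<rho> x (p x)) = (\<Sum>x\<in>qbasis Q. cnj (c (p x)) * \<rho> (p x) (p (p x)))"
      using sum_pflip[of "\<lambda>x. cnj (c x) * \<rho> x (p x)" Q t] by (simp add: p_def)
    also have "\<dots> = (\<Sum>x\<in>qbasis Q. c x * \<rho> (p x) x)"
      by (intro sum.cong refl) (simp add: p_def c_def pcoef_flip pflip_invol)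
    finally show ?thesis using trc by simp
  qed
  define k where "k x = e * cnj (c x)" for x
  define w where "w x = (\<lambda>z. delta x z + (- k x) * delta (p x) z)" for x
  have cc: "cnj (c x) * c x = 1" for x by (simp add: c_def pcoef_norm)
  have cc': "c x * cnj (c x) = 1" for x using cc[of x] by (simp add: mult.commute)
  have Bw: "Bf Q \<rho> (w x) (w x) = \<rho> x x - e * (c x * \<rho> (p x) x) - e * (cnj (c x) * \<rho> x (p x)) + \<rho> (p x) (p x)"
    if x: "x \<in> qbasis Q" for x
  proof -
    have "Bf Q \<rho> (w x) (w x) = \<rho> x x + cnj (- k x) * \<rho> (p x) x + (- k x) * \<rho> x (p x)
          + cnj (- k x) * (- k x) * \<rho> (p x) (p x)"
      unfolding w_def B_add using B_delta[OF fin] x pin by simp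
    also have "cnj (- k x) * (- k x) = e * e * (cnj (c x) * c x)" by (simp add: k_def ce algebra_simps)
    also have "cnj (- k x) = - e * c x" by (simp add: k_def ce)
    finally show ?thesis by (simp add: ee cc cc' k_def algebra_simps)
  qed
  have sum0: "(\<Sum>x\<in>qbasis Q. Bf Q \<rho> (w x) (w x)) = 0"
  proof -
    have "(\<Sum>x\<in>qbasis Q. Bf Q \<rho> (w x) (w x)) =
       (\<Sum>x\<in>qbasis Q. \<rho> x x) - e * (\<Sum>x\<in>qbasis Q. c x * \<rho> (p x) x) - e * (\<Sum>x\<in>qbasis Q. cnj (c x) * \<rho> x (p x))
        + (\<Sum>x\<in>qbasis Q. \<rho> (p x) (p x))"
      by (simp add: Bw sum.distrib sum_subtractf sum_distrib_left)
    then show ?thesis by (simp add: tr1 tr2 trc S2 ee)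
  qed
  have each0: "Bf Q \<rho> (w x) (w x) = 0" if x: "x \<in> qbasis Q" for x
  proof -
    have "(\<Sum>x\<in>qbasis Q. Re (Bf Q \<rho> (w x) (w x))) = 0" using sum0 by (metis Re_sum zero_complex.sel(1))
    moreover have "\<forall>x\<in>qbasis Q. Re (Bf Q \<rho> (w x) (w x)) \<ge> 0" using density_B[OF den] by auto
    ultimately have "\<forall>y\<in>qbasis Q. Re (Bf Q \<rho> (w y) (w y)) = 0"
      by (simp add: sum_nonneg_eq_0_iff finite_qbasis fin)
    then have "Re (Bf Q \<rho> (w x) (w x)) = 0" using x by blast
    moreover have "Im (Bf Q \<rho> (w x) (w x)) = 0" using density_B[OF den] by auto
    ultimately show ?thesis by (simp add: complex_eq_iff)
  qed
  have rel: "\<rho> a x = k x * \<rho> a (p x)" if a: "a \<in> qbasis Q" and x: "x \<in> qbasis Q" for a x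
  proof -
    have "0 = (\<Sum>b\<in>qbasis Q. \<rho> a b * w x b)" using B_null[OF fin den each0[OF x] a] by simp
    also have "\<dots> = (\<Sum>b\<in>qbasis Q. \<rho> a b * delta x b) - k x * (\<Sum>b\<in>qbasis Q. \<rho> a b * delta (p x) b)"
      by (simp add: w_def algebra_simps sum_subtractf sum_distrib_left)
    also have "\<dots> = \<rho> a x - k x * \<rho> a (p x)"
      using x pin[of x] by (simp add: sum_delta_r finite_qbasis fin)
    finally show ?thesis by simp
  qed
  have opz: "\<rho> a b = 0" if "a \<notin> qbasis Q \<or> b \<notin> qbasis Q" for a b
    using den that by (simp add: density_def is_op_def)
  show ?thesis
  proof
    fix x
    show "pauli_apply Q t (\<lambda>x. \<rho> x y) x = e * \<rho> x y"
    proof (cases "x \<in> qbasis Q \<and> y \<in> qbasis Q")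
      case True
      then have "\<rho> y x = k x * \<rho> y (p x)" using rel by blast
      then have "\<rho> x y = cnj (k x * \<rho> y (p x))" using rho_herm[OF fin den, of x y] by simp
      also have "\<dots> = e * c x * \<rho> (p x) y" using rho_herm[OF fin den, of "p x" y] by (simp add: k_def ce)
      finally have "e * \<rho> x y = c x * \<rho> (p x) y" by (simp add: ee mult.assoc[symmetric])
      then show ?thesis using True by (simp add: pauli_apply_eq c_def p_def)
    next
      case False
      then show ?thesis by (auto simp: pauli_apply_eq opz pin p_def)
    qed
  qed
qed



lemma qbasis_single: "qbasis {q} = {(\<lambda>i. False), (\<lambda>i. i = q)}"
proof -
  have "x = (\<lambda>i. False) \<or> x = (\<lambda>i. i = q)" if "x \<in> qbasis {q}" for x
  proof (cases "x q")
    case True then show ?thesis using that by (auto simp: qbasis_def fun_eq_iff)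
  next
    case False then show ?thesis using that by (auto simp: qbasis_def fun_eq_iff)
  qed
  then show ?thesis by (auto simp: qbasis_def)
qed

lemma sum_prod_qbasis:
  assumes "finite Q"
  shows "(\<Sum>b\<in>qbasis Q. \<Prod>j\<in>Q. g j (b j)) = (\<Prod>j\<in>Q. (g j False + g j True :: complex))"
  using assms
proof (induction Q rule: finite_induct)
  case empty
  have "qbasis {} = {\<lambda>i. False}" by (auto simp: qbasis_def)
  then show ?case by simp
next
  case (insert q F)
  have dis: "F \<inter> {q} = {}" using insert by auto
  have ne: "(\<lambda>i. False) \<noteq> (\<lambda>i::nat. i = q)" by (auto simp: fun_eq_iff)
  have "(\<Sum>b\<in>qbasis (insert q F). \<Prod>j\<in>insert q F. g j (b j)) =
      (\<Sum>x\<in>qbasis F. \<Sum>z\<in>qbasis {q}. \<Prod>j\<in>insert q F. g j (merge x z j))"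
    using sum_qbasis_split[OF dis, of "\<lambda>b. \<Prod>j\<in>insert q F. g j (b j)"] by simp
  also have "\<dots> = (\<Sum>x\<in>qbasis F. (\<Prod>j\<in>F. g j (x j)) * (g q False + g q True))"
  proof (intro sum.cong refl)
    fix x assume x: "x \<in> qbasis F"
    have xq: "\<not> x q" using x insert by (auto simp: qbasis_def)
    have m: "(\<Prod>j\<in>insert q F. g j (merge x z j)) = g q (z q) * (\<Prod>j\<in>F. g j (x j))"
      if "z \<in> qbasis {q}" for z
    proof -
      have "(\<Prod>j\<in>insert q F. g j (merge x z j)) = g q (merge x z q) * (\<Prod>j\<in>F. g j (merge x z j))"
        using insert by simp
      also have "(\<Prod>j\<in>F. g j (merge x z j)) = (\<Prod>j\<in>F. g j (x j))"
        using that insert by (intro prod.cong refl) (auto simp: merge_def qbasis_def)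
      finally show ?thesis using xq by (simp add: merge_def)
    qed
    have "(\<Sum>z\<in>qbasis {q}. \<Prod>j\<in>insert q F. g j (merge x z j)) = (\<Sum>z\<in>qbasis {q}. g q (z q) * (\<Prod>j\<in>F. g j (x j)))"
      using m by (intro sum.cong refl)
    also have "\<dots> = (g q False + g q True) * (\<Prod>j\<in>F. g j (x j))"
      using ne by (simp add: qbasis_single algebra_simps)
    finally show "(\<Sum>z\<in>qbasis {q}. \<Prod>j\<in>insert q F. g j (merge x z j)) = (\<Prod>j\<in>F. g j (x j)) * (g q False + g q True)"
      by (simp add: mult.commute)
  qed
  also have "\<dots> = (\<Sum>x\<in>qbasis F. (\<Prod>j\<in>F. g j (x j))) * (g q False + g q True)"
    by (simp add: sum_distrib_right)
  also have "\<dots> = (\<Prod>j\<in>insert q F. (g j False + g j True))"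
    using insert by (simp add: mult.commute)
  finally show ?case .
qed

definition chi :: "nat set \<Rightarrow> cfg \<Rightarrow> cfg \<Rightarrow> complex" where
  "chi Q b x = (\<Prod>j\<in>Q. if b j \<and> x j then -1 else 1)"

lemma chi_orth:
  assumes "finite Q" "x \<in> qbasis Q" "z \<in> qbasis Q"
  shows "(\<Sum>b\<in>qbasis Q. chi Q b x * chi Q b z) = (if x = z then 2 ^ card Q else 0)"
proof -
  have "(\<Sum>b\<in>qbasis Q. chi Q b x * chi Q b z) =
      (\<Sum>b\<in>qbasis Q. \<Prod>j\<in>Q. (\<lambda>j p. (if p \<and> x j then -1 else 1) * (if p \<and> z j then -1 else (1::complex))) j (b j))"
    unfolding chi_def by (simp add: prod.distrib)
  also have "\<dots> = (\<Prod>j\<in>Q. (1 + (if x j then -1 else 1) * (if z j then -1 else (1::complex))))"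
    using sum_prod_qbasis[OF assms(1), of "\<lambda>j p. (if p \<and> x j then -1 else 1) * (if p \<and> z j then -1 else (1::complex))"]
    by simp
  also have "\<dots> = (if x = z then 2 ^ card Q else 0)"
  proof (cases "x = z")
    case True
    have h: "(\<lambda>j. 1 + (if x j then -1 else 1) * (if z j then -1 else (1::complex))) = (\<lambda>j. 2)"
      using True by (rule_tac ext) auto
    show ?thesis unfolding h using True by simp
  next
    case False
    then obtain j where "x j \<noteq> z j" by (auto simp: fun_eq_iff)
    then have "j \<in> Q" using assms(2,3) by (auto simp: qbasis_def)
    moreover have "1 + (if x j then -1 else 1) * (if z j then -1 else (1::complex)) = 0"
      using \<open>x j \<noteq> z j\<close> by auto
    ultimately show ?thesis using False assms(1) \<open>x j \<noteq> z j\<close> by (auto intro: prod_zero)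
  qed
  finally show ?thesis .
qed

lemma pauli_complete:
  assumes fin: "finite Q" and uv: "is_vec Q u"
    and H: "\<forall>f. pauli_on Q f \<longrightarrow> (\<Sum>y\<in>qbasis Q. cnj (\<phi> y) * pauli_apply Q f u y) = 0"
    and y0: "y0 \<in> qbasis Q" and z0: "z0 \<in> qbasis Q"
  shows "cnj (\<phi> y0) * u z0 = 0"
proof -
  define a where "a = (\<lambda>j. y0 j \<noteq> z0 j)"
  define fl where "fl = (\<lambda>y::cfg. \<lambda>i. i \<in> Q \<and> (y i \<noteq> a i))"
  define h where "h y = cnj (\<phi> (fl y)) * u y" for y
  define fb where "fb b = (\<lambda>j. (of_bool (a j) :: bit, of_bool (b j) :: bit))" for b :: cfg
  define K where "K b = (\<Prod>j\<in>Q. if a j \<and> b j then \<i> else (1::complex))" for b :: cfg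
  have flin: "fl y \<in> qbasis Q" for y by (simp add: fl_def qbasis_def)
  have flinv: "fl (fl y) = y" if "y \<in> qbasis Q" for y using that by (auto simp: fl_def qbasis_def fun_eq_iff)
  have pfl: "pflip Q (fb b) = fl" for b by (auto simp: pflip_def fl_def fb_def fun_eq_iff)
  have pco: "pcoef Q (fb b) y = K b * chi Q b (fl y)" for b y
    unfolding pcoef_def pfl K_def chi_def by (simp add: prod.distrib[symmetric] gam_def fb_def)
  have Knz: "K b \<noteq> 0" for b by (simp add: K_def fin)
  have hsum: "(\<Sum>y\<in>qbasis Q. h y * chi Q b y) = 0" if b: "b \<in> qbasis Q" for b
  proof -
    have pon: "pauli_on Q (fb b)" using b y0 z0 by (auto simp: pauli_on_def fb_def a_def qbasis_def)
    have "0 = (\<Sum>y\<in>qbasis Q. cnj (\<phi> y) * pauli_apply Q (fb b) u y)" using H pon by simp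
    also have "\<dots> = K b * (\<Sum>y\<in>qbasis Q. cnj (\<phi> y) * chi Q b (fl y) * u (fl y))"
      by (simp add: sum_distrib_left pauli_apply_eq pco pfl algebra_simps)
    also have "(\<Sum>y\<in>qbasis Q. cnj (\<phi> y) * chi Q b (fl y) * u (fl y)) = (\<Sum>y\<in>qbasis Q. h y * chi Q b y)"
    proof -
      have "(\<Sum>y\<in>qbasis Q. cnj (\<phi> y) * chi Q b (fl y) * u (fl y)) =
          (\<Sum>y\<in>qbasis Q. cnj (\<phi> (fl y)) * chi Q b (fl (fl y)) * u (fl (fl y)))"
        using sum_pflip[of "\<lambda>y. cnj (\<phi> y) * chi Q b (fl y) * u (fl y)" Q "fb b"] by (simp add: pfl)
      also have "\<dots> = (\<Sum>y\<in>qbasis Q. h y * chi Q b y)"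
        by (intro sum.cong refl) (simp add: flinv h_def)
      finally show ?thesis .
    qed
    finally show ?thesis using Knz by simp
  qed
  have "0 = (\<Sum>b\<in>qbasis Q. chi Q b z0 * (\<Sum>y\<in>qbasis Q. h y * chi Q b y))"
    using hsum by simp
  also have "\<dots> = (\<Sum>b\<in>qbasis Q. \<Sum>y\<in>qbasis Q. h y * (chi Q b y * chi Q b z0))"
    by (simp add: sum_distrib_left algebra_simps)
  also have "\<dots> = (\<Sum>y\<in>qbasis Q. \<Sum>b\<in>qbasis Q. h y * (chi Q b y * chi Q b z0))"
    by (rule sum.swap)
  also have "\<dots> = (\<Sum>y\<in>qbasis Q. h y * (\<Sum>b\<in>qbasis Q. chi Q b y * chi Q b z0))"
    by (simp add: sum_distrib_left)
  also have "\<dots> = (\<Sum>y\<in>qbasis Q. if y = z0 then h y * 2 ^ card Q else 0)"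
    by (intro sum.cong refl) (simp add: chi_orth[OF fin _ z0])
  also have "\<dots> = h z0 * 2 ^ card Q" using z0 fin finite_qbasis by simp
  finally have "h z0 = 0" by simp
  moreover have "fl z0 = y0" using y0 z0 by (auto simp: fl_def a_def qbasis_def fun_eq_iff)
  ultimately show ?thesis by (simp add: h_def)
qed



lemma pauli_scal: "pauli_apply Q f (\<lambda>x. a * v x) = (\<lambda>x. a * pauli_apply Q f v x)"
  by (rule ext) (simp add: pauli_apply_eq)

lemma pauli_diff: "pauli_apply Q f (\<lambda>x. u x - a * v x) = (\<lambda>x. pauli_apply Q f u x - a * pauli_apply Q f v x)"
  by (rule ext) (simp add: pauli_apply_eq algebra_simps)

lemma stab_unique:
  assumes fin: "finite Q" and uphi: "unit_vec Q \<phi>"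
    and eps: "\<forall>f\<in>S. \<epsilon> f \<in> {1,-1} \<and> pauli_apply Q f \<phi> = (\<lambda>x. \<epsilon> f * \<phi> x)"
    and TS: "T \<subseteq> S"
    and Tgen: "\<forall>f. pauli_on Q f \<and> (\<forall>t\<in>T. symp Q f t = 0) \<longrightarrow> f \<in> S"
    and uv: "is_vec Q u"
    and ust: "\<forall>t\<in>T. pauli_apply Q t u = (\<lambda>x. \<epsilon> t * u x)"
  shows "u z = (\<Sum>y\<in>qbasis Q. cnj (\<phi> y) * u y) * \<phi> z"
proof -
  define c where "c = (\<Sum>y\<in>qbasis Q. cnj (\<phi> y) * u y)"
  define w where "w = (\<lambda>x. u x - c * \<phi> x)"
  have phiv: "is_vec Q \<phi>" using uphi by (simp add: unit_vec_def)
  have wv: "is_vec Q w" using uv phiv by (simp add: is_vec_def w_def)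
  have wst: "pauli_apply Q t w = (\<lambda>x. \<epsilon> t * w x)" if t: "t \<in> T" for t
  proof -
    have "pauli_apply Q t \<phi> = (\<lambda>x. \<epsilon> t * \<phi> x)" using eps TS t by auto
    then show ?thesis unfolding w_def pauli_diff using ust t by (auto simp: algebra_simps)
  qed
  have norm1: "(\<Sum>y\<in>qbasis Q. cnj (\<phi> y) * \<phi> y) = 1"
    using unit_sum[OF uphi] by (simp add: mult.commute)
  have orth: "(\<Sum>y\<in>qbasis Q. cnj (\<phi> y) * w y) = 0"
  proof -
    have "(\<Sum>y\<in>qbasis Q. cnj (\<phi> y) * w y) = (\<Sum>y\<in>qbasis Q. cnj (\<phi> y) * u y) - c * (\<Sum>y\<in>qbasis Q. cnj (\<phi> y) * \<phi> y)"
      unfolding w_def by (simp add: right_diff_distrib sum_subtractf sum_distrib_left mult.left_commute)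
    then show ?thesis using norm1 by (simp add: c_def)
  qed
  have H: "\<forall>f. pauli_on Q f \<longrightarrow> (\<Sum>y\<in>qbasis Q. cnj (\<phi> y) * pauli_apply Q f w y) = 0"
  proof (intro allI impI)
    fix f assume pf: "pauli_on Q f"
    show "(\<Sum>y\<in>qbasis Q. cnj (\<phi> y) * pauli_apply Q f w y) = 0"
    proof (cases "f \<in> S")
      case True
      then have ef: "\<epsilon> f \<in> {1,-1}" and sf: "pauli_apply Q f \<phi> = (\<lambda>x. \<epsilon> f * \<phi> x)" using eps by auto
      have "(\<Sum>y\<in>qbasis Q. cnj (\<phi> y) * pauli_apply Q f w y) = (\<Sum>y\<in>qbasis Q. cnj (pauli_apply Q f \<phi> y) * w y)"
        by (rule pauli_herm)
      also have "\<dots> = cnj (\<epsilon> f) * (\<Sum>y\<in>qbasis Q. cnj (\<phi> y) * w y)"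
        by (simp add: sf sum_distrib_left mult.assoc)
      finally show ?thesis using orth by simp
    next
      case False
      then obtain t where t: "t \<in> T" and st: "symp Q f t \<noteq> 0" using Tgen pf by blast
      then have st1: "symp Q f t = 1" by simp
      have et: "\<epsilon> t \<in> {1,-1}" using eps TS t by auto
      then have ee: "\<epsilon> t * \<epsilon> t = 1" and ce: "cnj (\<epsilon> t) = \<epsilon> t" by auto
      have sphi: "pauli_apply Q t \<phi> = (\<lambda>x. \<epsilon> t * \<phi> x)" using eps TS t by auto
      have wexp: "w = (\<lambda>x. \<epsilon> t * pauli_apply Q t w x)"
        using wst[OF t] ee by (simp add: mult.assoc[symmetric])
      define Z where "Z = (\<Sum>y\<in>qbasis Q. cnj (\<phi> y) * pauli_apply Q f w y)"
      have "Z = (\<Sum>y\<in>qbasis Q. cnj (\<phi> y) * (\<epsilon> t * pauli_apply Q f (pauli_apply Q t w) y))"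
        unfolding Z_def by (subst wexp) (simp only: pauli_scal)
      also have "\<dots> = (\<Sum>y\<in>qbasis Q. cnj (\<phi> y) * (- \<epsilon> t * pauli_apply Q t (pauli_apply Q f w) y))"
        by (intro sum.cong refl) (subst pauli_comm[OF fin], simp add: st1)
      also have "\<dots> = - \<epsilon> t * (\<Sum>y\<in>qbasis Q. cnj (\<phi> y) * pauli_apply Q t (pauli_apply Q f w) y)"
        by (simp add: sum_distrib_left algebra_simps)
      also have "(\<Sum>y\<in>qbasis Q. cnj (\<phi> y) * pauli_apply Q t (pauli_apply Q f w) y) =
          (\<Sum>y\<in>qbasis Q. cnj (pauli_apply Q t \<phi> y) * pauli_apply Q f w y)"
        by (rule pauli_herm)
      also have "\<dots> = \<epsilon> t * Z"
        by (simp add: sphi ce Z_def sum_distrib_left mult.assoc)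
      finally have "Z = - (\<epsilon> t * \<epsilon> t) * Z" by (simp add: algebra_simps)
      then have "Z = 0" using ee by simp
      then show ?thesis by (simp add: Z_def)
    qed
  qed
  obtain y0 where y0: "y0 \<in> qbasis Q" "\<phi> y0 \<noteq> 0"
  proof (rule ccontr)
    assume "\<not> thesis"
    then have "\<forall>y\<in>qbasis Q. \<phi> y = 0" using that by blast
    then have "(\<Sum>y\<in>qbasis Q. cnj (\<phi> y) * \<phi> y) = 0" by simp
    then show False using norm1 by simp
  qed
  have "w z = 0"
  proof (cases "z \<in> qbasis Q")
    case True
    have "cnj (\<phi> y0) * w z = 0" by (rule pauli_complete[OF fin wv H y0(1) True])
    then show ?thesis using y0(2) by simp
  next
    case False
    then show ?thesis using wv by (simp add: is_vec_def)
  qed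
  then show ?thesis by (simp add: w_def c_def)
qed



lemma merge_in': "x \<in> qbasis A \<Longrightarrow> z \<in> qbasis B \<Longrightarrow> A \<union> B \<subseteq> C \<Longrightarrow> merge x z \<in> qbasis C"
  by (auto simp: qbasis_def merge_def)

lemma ptrace_tensor:
  assumes dis: "Q1 \<inter> Q2 = {}"
  shows "ptrace (Q1 \<union> Q2) A (tensor_op Q1 Q2 \<sigma> \<tau>) =
    tensor_op (Q1 - A) (Q2 - A) (ptrace Q1 (Q1 \<inter> A) \<sigma>) (ptrace Q2 (Q2 \<inter> A) \<tau>)"
proof (rule ext, rule ext)
  fix x y
  have e1: "(Q1 \<union> Q2) - A = (Q1 - A) \<union> (Q2 - A)" and e2: "(Q1 \<union> Q2) \<inter> A = (Q1 \<inter> A) \<union> (Q2 \<inter> A)"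
    and e3: "Q1 - Q1 \<inter> A = Q1 - A" and e4: "Q1 \<inter> (Q1 \<inter> A) = Q1 \<inter> A"
    and e5: "Q2 - Q2 \<inter> A = Q2 - A" and e6: "Q2 \<inter> (Q2 \<inter> A) = Q2 \<inter> A" by blast+
  have d1: "(Q1 - A) \<inter> (Q2 - A) = {}" and d2: "(Q1 \<inter> A) \<inter> (Q2 \<inter> A) = {}" using dis by blast+
  show "ptrace (Q1 \<union> Q2) A (tensor_op Q1 Q2 \<sigma> \<tau>) x y =
    tensor_op (Q1 - A) (Q2 - A) (ptrace Q1 (Q1 \<inter> A) \<sigma>) (ptrace Q2 (Q2 \<inter> A) \<tau>) x y"
  proof (cases "x \<in> qbasis ((Q1 - A) \<union> (Q2 - A)) \<and> y \<in> qbasis ((Q1 - A) \<union> (Q2 - A))")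
    case True
    define x1 x2 y1 y2 where "x1 = restr x (Q1 - A)" and "x2 = restr x (Q2 - A)"
      and "y1 = restr y (Q1 - A)" and "y2 = restr y (Q2 - A)"
    have xs: "x = merge x1 x2" "y = merge y1 y2" using True merge_restr
      by (auto simp: x1_def x2_def y1_def y2_def)
    have ins: "x1 \<in> qbasis (Q1 - A)" "x2 \<in> qbasis (Q2 - A)" "y1 \<in> qbasis (Q1 - A)" "y2 \<in> qbasis (Q2 - A)"
      by (auto simp: x1_def x2_def y1_def y2_def restr_in)
    have mm: "merge (merge a b) (merge c d) = merge (merge a c) (merge b d)" for a b c d
      by (auto simp: merge_def fun_eq_iff)
    have "ptrace (Q1 \<union> Q2) A (tensor_op Q1 Q2 \<sigma> \<tau>) x y =
       (\<Sum>z\<in>qbasis ((Q1 \<inter> A) \<union> (Q2 \<inter> A)). tensor_op Q1 Q2 \<sigma> \<tau> (merge x z) (merge y z))"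
      using True by (simp add: ptrace_def e1 e2)
    also have "\<dots> = (\<Sum>z1\<in>qbasis (Q1 \<inter> A). \<Sum>z2\<in>qbasis (Q2 \<inter> A).
        tensor_op Q1 Q2 \<sigma> \<tau> (merge x (merge z1 z2)) (merge y (merge z1 z2)))"
      using d2 by (rule sum_qbasis_split)
    also have "\<dots> = (\<Sum>z1\<in>qbasis (Q1 \<inter> A). \<Sum>z2\<in>qbasis (Q2 \<inter> A).
        \<sigma> (merge x1 z1) (merge y1 z1) * \<tau> (merge x2 z2) (merge y2 z2))"
    proof (intro sum.cong refl)
      fix z1 z2 assume z1: "z1 \<in> qbasis (Q1 \<inter> A)" and z2: "z2 \<in> qbasis (Q2 \<inter> A)"
      have a1: "merge x1 z1 \<in> qbasis Q1" "merge y1 z1 \<in> qbasis Q1"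
        using ins z1 by (auto intro!: merge_in')
      have a2: "merge x2 z2 \<in> qbasis Q2" "merge y2 z2 \<in> qbasis Q2"
        using ins z2 by (auto intro!: merge_in')
      show "tensor_op Q1 Q2 \<sigma> \<tau> (merge x (merge z1 z2)) (merge y (merge z1 z2)) =
          \<sigma> (merge x1 z1) (merge y1 z1) * \<tau> (merge x2 z2) (merge y2 z2)"
        unfolding xs mm[of x1 x2 z1 z2] mm[of y1 y2 z1 z2] using tensor_op_merge[OF dis a1(1) a2(1) a1(2) a2(2)] .
    qed
    also have "\<dots> = ptrace Q1 (Q1 \<inter> A) \<sigma> x1 y1 * ptrace Q2 (Q2 \<inter> A) \<tau> x2 y2"
      using ins by (simp add: ptrace_def e3 e4 e5 e6 sum_product)
    also have "\<dots> = tensor_op (Q1 - A) (Q2 - A) (ptrace Q1 (Q1 \<inter> A) \<sigma>) (ptrace Q2 (Q2 \<inter> A) \<tau>) x y"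
      unfolding xs using tensor_op_merge[OF d1 ins(1,2,3,4)] by simp
    finally show ?thesis .
  next
    case False
    then show ?thesis by (auto simp: ptrace_def tensor_op_def e1)
  qed
qed

lemma proj_tensor: "proj (tensor_vec Q1 Q2 \<psi> \<phi>) = tensor_op Q1 Q2 (proj \<psi>) (proj \<phi>)"
  by (rule ext, rule ext) (simp add: proj_def tensor_vec_def tensor_op_def)

lemma trace_ptrace:
  "(\<Sum>x\<in>qbasis (Q - A). ptrace Q A \<rho> x x) = (\<Sum>x\<in>qbasis Q. \<rho> x x)"
proof -
  have QU: "(Q - A) \<union> (Q \<inter> A) = Q" by blast
  have "(\<Sum>x\<in>qbasis (Q - A). ptrace Q A \<rho> x x) = (\<Sum>x\<in>qbasis (Q - A). \<Sum>z\<in>qbasis (Q \<inter> A). \<rho> (merge x z) (merge x z))"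
    by (simp add: ptrace_def)
  also have "\<dots> = (\<Sum>x\<in>qbasis ((Q - A) \<union> (Q \<inter> A)). \<rho> x x)"
    by (rule sum_qbasis_split[symmetric]) blast
  finally show ?thesis by (simp only: QU)
qed

lemma tensor_cancel:
  assumes dis: "A \<inter> B = {}" and "is_op A a" "is_op A b" and z0: "z0 \<in> qbasis B" and nz: "\<tau> z0 z0 \<noteq> 0"
    and eq: "tensor_op A B a \<tau> = tensor_op A B b \<tau>"
  shows "a = b"
proof (rule ext, rule ext)
  fix x y
  show "a x y = b x y"
  proof (cases "x \<in> qbasis A \<and> y \<in> qbasis A")
    case True
    have "a x y * \<tau> z0 z0 = b x y * \<tau> z0 z0"
      using fun_cong[OF fun_cong[OF eq, of "merge x z0"], of "merge y z0"] True z0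
      by (simp add: tensor_op_merge[OF dis])
    then show ?thesis using nz by simp
  next
    case False
    then show ?thesis using assms(2,3) by (auto simp: is_op_def)
  qed
qed

lemma B_tensor_gen:
  assumes dis: "Q1 \<inter> Q2 = {}"
  shows "Bf (Q1 \<union> Q2) (tensor_op Q1 Q2 \<sigma> (proj \<phi>)) V V =
    Bf Q1 \<sigma> (\<lambda>x. \<Sum>z\<in>qbasis Q2. cnj (\<phi> z) * V (merge x z)) (\<lambda>x. \<Sum>z\<in>qbasis Q2. cnj (\<phi> z) * V (merge x z))"
proof -
  define F where "F x z y z' = cnj (V (merge x z)) * (\<sigma> x y * (\<phi> z * cnj (\<phi> z'))) * V (merge y z')" for x z y z'
  have "Bf (Q1 \<union> Q2) (tensor_op Q1 Q2 \<sigma> (proj \<phi>)) V V =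
     (\<Sum>x\<in>qbasis Q1. \<Sum>z\<in>qbasis Q2. \<Sum>Y\<in>qbasis (Q1 \<union> Q2).
        cnj (V (merge x z)) * tensor_op Q1 Q2 \<sigma> (proj \<phi>) (merge x z) Y * V Y)"
    unfolding Bf_def using dis by (rule sum_qbasis_split)
  also have "\<dots> = (\<Sum>x\<in>qbasis Q1. \<Sum>z\<in>qbasis Q2. \<Sum>y\<in>qbasis Q1. \<Sum>z'\<in>qbasis Q2. F x z y z')"
  proof (rule sum.cong[OF refl], rule sum.cong[OF refl])
    fix x z assume x: "x \<in> qbasis Q1" and z: "z \<in> qbasis Q2"
    have "(\<Sum>Y\<in>qbasis (Q1 \<union> Q2). cnj (V (merge x z)) * tensor_op Q1 Q2 \<sigma> (proj \<phi>) (merge x z) Y * V Y) =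
      (\<Sum>y\<in>qbasis Q1. \<Sum>z'\<in>qbasis Q2. cnj (V (merge x z)) * tensor_op Q1 Q2 \<sigma> (proj \<phi>) (merge x z) (merge y z') * V (merge y z'))"
      using dis by (rule sum_qbasis_split)
    also have "\<dots> = (\<Sum>y\<in>qbasis Q1. \<Sum>z'\<in>qbasis Q2. F x z y z')"
      by (intro sum.cong refl) (simp add: F_def tensor_op_merge[OF dis] x z proj_def)
    finally show "(\<Sum>Y\<in>qbasis (Q1 \<union> Q2). cnj (V (merge x z)) * tensor_op Q1 Q2 \<sigma> (proj \<phi>) (merge x z) Y * V Y) =
      (\<Sum>y\<in>qbasis Q1. \<Sum>z'\<in>qbasis Q2. F x z y z')" .
  qed
  also have "\<dots> = (\<Sum>x\<in>qbasis Q1. \<Sum>y\<in>qbasis Q1. \<Sum>z\<in>qbasis Q2. \<Sum>z'\<in>qbasis Q2. F x z y z')"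
    by (rule sum.cong[OF refl]) (rule sum.swap)
  also have "\<dots> = Bf Q1 \<sigma> (\<lambda>x. \<Sum>z\<in>qbasis Q2. cnj (\<phi> z) * V (merge x z)) (\<lambda>x. \<Sum>z\<in>qbasis Q2. cnj (\<phi> z) * V (merge x z))"
    unfolding Bf_def
  proof (intro sum.cong refl)
    fix x y
    have "cnj (\<Sum>z\<in>qbasis Q2. cnj (\<phi> z) * V (merge x z)) * \<sigma> x y * (\<Sum>z\<in>qbasis Q2. cnj (\<phi> z) * V (merge y z))
       = (\<Sum>z\<in>qbasis Q2. \<phi> z * cnj (V (merge x z)) * \<sigma> x y) * (\<Sum>z'\<in>qbasis Q2. cnj (\<phi> z') * V (merge y z'))"
      by (simp add: cnj_sum sum_distrib_right)
    also have "\<dots> = (\<Sum>z\<in>qbasis Q2. \<Sum>z'\<in>qbasis Q2. (\<phi> z * cnj (V (merge x z)) * \<sigma> x y) * (cnj (\<phi> z') * V (merge y z')))"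
      by (rule sum_product)
    also have "\<dots> = (\<Sum>z\<in>qbasis Q2. \<Sum>z'\<in>qbasis Q2. F x z y z')"
      by (simp add: F_def algebra_simps)
    finally show "(\<Sum>z\<in>qbasis Q2. \<Sum>z'\<in>qbasis Q2. F x z y z') =
      cnj (\<Sum>z\<in>qbasis Q2. cnj (\<phi> z) * V (merge x z)) * \<sigma> x y * (\<Sum>z\<in>qbasis Q2. cnj (\<phi> z) * V (merge y z))"
      by simp
  qed
  finally show ?thesis .
qed

lemma trace_tensor:
  assumes dis: "Q1 \<inter> Q2 = {}" and u: "unit_vec Q2 \<phi>"
  shows "(\<Sum>X\<in>qbasis (Q1 \<union> Q2). tensor_op Q1 Q2 \<sigma> (proj \<phi>) X X) = (\<Sum>x\<in>qbasis Q1. \<sigma> x x)"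
proof -
  have "(\<Sum>X\<in>qbasis (Q1 \<union> Q2). tensor_op Q1 Q2 \<sigma> (proj \<phi>) X X) =
     (\<Sum>x\<in>qbasis Q1. \<Sum>z\<in>qbasis Q2. tensor_op Q1 Q2 \<sigma> (proj \<phi>) (merge x z) (merge x z))"
    using dis by (rule sum_qbasis_split)
  also have "\<dots> = (\<Sum>x\<in>qbasis Q1. \<sigma> x x * (\<Sum>z\<in>qbasis Q2. \<phi> z * cnj (\<phi> z)))"
    by (intro sum.cong refl) (simp add: tensor_op_merge[OF dis] proj_def sum_distrib_left)
  finally show ?thesis using unit_sum[OF u] by simp
qed



lemma marg_iff:
  assumes dis: "Q1 \<inter> Q2 = {}" and u: "unit_vec Q2 \<phi>"
  shows "ptrace (Q1 \<union> Q2) A (tensor_op Q1 Q2 \<sigma> (proj \<phi>)) = ptrace (Q1 \<union> Q2) A (tensor_op Q1 Q2 \<sigma>' (proj \<phi>))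
     \<longleftrightarrow> ptrace Q1 (Q1 \<inter> A) \<sigma> = ptrace Q1 (Q1 \<inter> A) \<sigma>'"
proof
  assume eq: "ptrace (Q1 \<union> Q2) A (tensor_op Q1 Q2 \<sigma> (proj \<phi>)) = ptrace (Q1 \<union> Q2) A (tensor_op Q1 Q2 \<sigma>' (proj \<phi>))"
  define \<tau> where "\<tau> = ptrace Q2 (Q2 \<inter> A) (proj \<phi>)"
  have e: "Q2 - Q2 \<inter> A = Q2 - A" and e1: "Q1 - Q1 \<inter> A = Q1 - A" by blast+
  have "(\<Sum>x\<in>qbasis (Q2 - A). \<tau> x x) = (\<Sum>x\<in>qbasis Q2. proj \<phi> x x)"
    using trace_ptrace[of Q2 "Q2 \<inter> A" "proj \<phi>"] by (simp add: \<tau>_def e)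
  also have "\<dots> = 1" using unit_sum[OF u] by (simp add: proj_def)
  finally obtain z0 where z0: "z0 \<in> qbasis (Q2 - A)" "\<tau> z0 z0 \<noteq> 0"
    by (metis (no_types, lifting) sum.neutral zero_neq_one)
  have d: "(Q1 - A) \<inter> (Q2 - A) = {}" using dis by blast
  show "ptrace Q1 (Q1 \<inter> A) \<sigma> = ptrace Q1 (Q1 \<inter> A) \<sigma>'"
  proof (rule tensor_cancel[of "Q1 - A" "Q2 - A" _ _ z0 \<tau>, OF d _ _ z0(1) z0(2)])
    show "is_op (Q1 - A) (ptrace Q1 (Q1 \<inter> A) \<sigma>)" "is_op (Q1 - A) (ptrace Q1 (Q1 \<inter> A) \<sigma>')"
      by (auto simp: is_op_def ptrace_def e1)
    show "tensor_op (Q1 - A) (Q2 - A) (ptrace Q1 (Q1 \<inter> A) \<sigma>) \<tau> =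
        tensor_op (Q1 - A) (Q2 - A) (ptrace Q1 (Q1 \<inter> A) \<sigma>') \<tau>"
      using eq by (simp add: ptrace_tensor[OF dis] \<tau>_def)
  qed
next
  assume "ptrace Q1 (Q1 \<inter> A) \<sigma> = ptrace Q1 (Q1 \<inter> A) \<sigma>'"
  then show "ptrace (Q1 \<union> Q2) A (tensor_op Q1 Q2 \<sigma> (proj \<phi>)) = ptrace (Q1 \<union> Q2) A (tensor_op Q1 Q2 \<sigma>' (proj \<phi>))"
    by (simp add: ptrace_tensor[OF dis])
qed

lemma dens_tensor:
  assumes dis: "Q1 \<inter> Q2 = {}" and u: "unit_vec Q2 \<phi>" and d: "density Q1 \<sigma>"
  shows "density (Q1 \<union> Q2) (tensor_op Q1 Q2 \<sigma> (proj \<phi>))"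
  unfolding density_def
proof (intro conjI allI)
  show "is_op (Q1 \<union> Q2) (tensor_op Q1 Q2 \<sigma> (proj \<phi>))" by (auto simp: is_op_def tensor_op_def)
  fix v
  have "Bf (Q1 \<union> Q2) (tensor_op Q1 Q2 \<sigma> (proj \<phi>)) v v = Bf Q1 \<sigma> (\<lambda>x. \<Sum>z\<in>qbasis Q2. cnj (\<phi> z) * v (merge x z)) (\<lambda>x. \<Sum>z\<in>qbasis Q2. cnj (\<phi> z) * v (merge x z))"
    by (rule B_tensor_gen[OF dis])
  then have "Im (Bf (Q1 \<union> Q2) (tensor_op Q1 Q2 \<sigma> (proj \<phi>)) v v) = 0 \<and> Re (Bf (Q1 \<union> Q2) (tensor_op Q1 Q2 \<sigma> (proj \<phi>)) v v) \<ge> 0"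
    using density_B[OF d] by simp
  then show "Im (\<Sum>x\<in>qbasis (Q1 \<union> Q2). \<Sum>y\<in>qbasis (Q1 \<union> Q2). cnj (v x) * tensor_op Q1 Q2 \<sigma> (proj \<phi>) x y * v y) = 0"
    "0 \<le> Re (\<Sum>x\<in>qbasis (Q1 \<union> Q2). \<Sum>y\<in>qbasis (Q1 \<union> Q2). cnj (v x) * tensor_op Q1 Q2 \<sigma> (proj \<phi>) x y * v y)"
    by (simp_all add: Bf_def)
next
  show "(\<Sum>x\<in>qbasis (Q1 \<union> Q2). tensor_op Q1 Q2 \<sigma> (proj \<phi>) x x) = 1"
    using trace_tensor[OF dis u] d by (simp add: density_def)
qed

lemma dens_tensor_rev:
  assumes dis: "Q1 \<inter> Q2 = {}" and u: "unit_vec Q2 \<phi>" and op: "is_op Q1 \<sigma>"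
    and d: "density (Q1 \<union> Q2) (tensor_op Q1 Q2 \<sigma> (proj \<phi>))"
  shows "density Q1 \<sigma>"
  unfolding density_def
proof (intro conjI allI)
  show "is_op Q1 \<sigma>" by (rule op)
  fix v
  define V where "V = tensor_vec Q1 Q2 v \<phi>"
  have W: "(\<Sum>z\<in>qbasis Q2. cnj (\<phi> z) * V (merge x z)) = v x" if x: "x \<in> qbasis Q1" for x
  proof -
    have "(\<Sum>z\<in>qbasis Q2. cnj (\<phi> z) * V (merge x z)) = v x * (\<Sum>z\<in>qbasis Q2. \<phi> z * cnj (\<phi> z))"
      by (simp add: V_def tensor_vec_merge[OF dis x] sum_distrib_left algebra_simps)
    then show ?thesis using unit_sum[OF u] by simp
  qed
  have "Bf Q1 \<sigma> v v = Bf Q1 \<sigma> (\<lambda>x. \<Sum>z\<in>qbasis Q2. cnj (\<phi> z) * V (merge x z)) (\<lambda>x. \<Sum>z\<in>qbasis Q2. cnj (\<phi> z) * V (merge x z))"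
    unfolding Bf_def by (intro sum.cong refl) (simp add: W)
  also have "\<dots> = Bf (Q1 \<union> Q2) (tensor_op Q1 Q2 \<sigma> (proj \<phi>)) V V"
    by (rule B_tensor_gen[OF dis, symmetric])
  finally have "Im (Bf Q1 \<sigma> v v) = 0 \<and> Re (Bf Q1 \<sigma> v v) \<ge> 0"
    using density_B[OF d] by simp
  then show "Im (\<Sum>x\<in>qbasis Q1. \<Sum>y\<in>qbasis Q1. cnj (v x) * \<sigma> x y * v y) = 0"
    "0 \<le> Re (\<Sum>x\<in>qbasis Q1. \<Sum>y\<in>qbasis Q1. cnj (v x) * \<sigma> x y * v y)"
    by (simp_all add: Bf_def)
next
  show "(\<Sum>x\<in>qbasis Q1. \<sigma> x x) = 1"
    using trace_tensor[OF dis u] d by (simp add: density_def)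
qed



theorem corollary1:
  fixes owner :: "nat \<Rightarrow> 'p" and M :: "'p set"
    and Q1 Q2 :: "nat set" and \<psi>' \<phi> :: qvec and S' S\<phi> :: "pauli_label set"
  assumes "finite M" and "finite Q1" and "finite Q2" and "Q1 \<inter> Q2 = {}"
    and "owner ` (Q1 \<union> Q2) \<subseteq> M"
    and "stabilizer_state Q1 S' \<psi>'"
    and "stabilizer_state Q2 S\<phi> \<phi>"
    and "S\<phi> = subgroup_sum M (\<lambda>\<alpha>. colocal owner \<alpha> S\<phi>)"
  shows "Gamma owner M (Q1 \<union> Q2) (tensor_vec Q1 Q2 \<psi>' \<phi>) =
         (\<lambda>\<rho>'. tensor_op Q1 Q2 \<rho>' (proj \<phi>)) ` Gamma owner M Q1 \<psi>'"
proof -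
  note fin1 = assms(2) and fin2 = assms(3) and dis = assms(4)
  define Q where "Q = Q1 \<union> Q2"
  define \<Psi> where "\<Psi> = tensor_vec Q1 Q2 \<psi>' \<phi>"
  have finQ: "finite Q" using fin1 fin2 by (simp add: Q_def)
  have u1: "unit_vec Q1 \<psi>'" using assms(6) by (simp add: stabilizer_state_def)
  have u2: "unit_vec Q2 \<phi>" using assms(7) by (simp add: stabilizer_state_def)
  have Sd: "S\<phi> = {f. pauli_on Q2 f \<and> (\<forall>g\<in>S\<phi>. symp Q2 f g = 0)}"
    using assms(7) by (simp add: stabilizer_state_def)
  obtain \<epsilon> where eps: "\<forall>f\<in>S\<phi>. \<epsilon> f \<in> {1, -1} \<and> pauli_apply Q2 f \<phi> = (\<lambda>x. \<epsilon> f * \<phi> x)"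
    using assms(7) unfolding stabilizer_state_def by blast
  have uPsi: "unit_vec Q \<Psi>" unfolding Q_def \<Psi>_def by (rule unit_tensor[OF dis u1 u2])
  have projPsi: "proj \<Psi> = tensor_op Q1 Q2 (proj \<psi>') (proj \<phi>)" by (simp add: \<Psi>_def proj_tensor)
  define T where "T = (\<Union>\<alpha>\<in>M. colocal owner \<alpha> S\<phi>)"
  have TS: "T \<subseteq> S\<phi>" by (auto simp: T_def colocal_def)
  have Tgen: "\<forall>f. pauli_on Q2 f \<and> (\<forall>t\<in>T. symp Q2 f t = 0) \<longrightarrow> f \<in> S\<phi>"
  proof (intro allI impI)
    fix f assume f: "pauli_on Q2 f \<and> (\<forall>t\<in>T. symp Q2 f t = 0)"
    have "symp Q2 f g = 0" if g: "g \<in> S\<phi>" for g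
    proof -
      obtain G where gG: "g = (\<lambda>j. (\<Sum>\<alpha>\<in>M. fst (G \<alpha> j), \<Sum>\<alpha>\<in>M. snd (G \<alpha> j)))"
        and G: "\<forall>\<alpha>\<in>M. G \<alpha> \<in> colocal owner \<alpha> S\<phi>"
        using g assms(8) unfolding subgroup_sum_def by blast
      have "symp Q2 f g = (\<Sum>j\<in>Q2. \<Sum>\<alpha>\<in>M. fst (f j) * snd (G \<alpha> j) + snd (f j) * fst (G \<alpha> j))"
        unfolding symp_def gG by (simp only: fst_conv snd_conv sum_distrib_left sum.distrib[symmetric])
      also have "\<dots> = (\<Sum>\<alpha>\<in>M. symp Q2 f (G \<alpha>))"
        unfolding symp_def by (rule sum.swap)
      also have "\<dots> = 0"
        using f G by (intro sum.neutral) (auto simp: T_def)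
      finally show ?thesis .
    qed
    then show "f \<in> S\<phi>" using f Sd by blast
  qed
  have pq: "party_qubits owner Q1 \<alpha> = Q1 \<inter> party_qubits owner Q \<alpha>" for \<alpha>
    by (auto simp: party_qubits_def Q_def)
  have QQ2: "Q - Q2 = Q1" "Q \<inter> Q2 = Q2" using dis by (auto simp: Q_def)
  have fwd: "\<rho> \<in> (\<lambda>\<rho>'. tensor_op Q1 Q2 \<rho>' (proj \<phi>)) ` Gamma owner M Q1 \<psi>'"
    if rG: "\<rho> \<in> Gamma owner M Q \<Psi>" for \<rho>
  proof -
    have den: "density Q \<rho>" and marg: "\<forall>\<alpha>\<in>M. ptrace Q (party_qubits owner Q \<alpha>) \<rho> =
             ptrace Q (party_qubits owner Q \<alpha>) (proj \<Psi>)" using rG by (auto simp: Gamma_def)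
    have opz: "\<rho> a b = 0" if "a \<notin> qbasis Q \<or> b \<notin> qbasis Q" for a b
      using den that by (simp add: density_def is_op_def)
    have stab: "pauli_apply Q t (\<lambda>x. \<rho> x y) = (\<lambda>x. \<epsilon> t * \<rho> x y)" if t: "t \<in> T" for t y
    proof -
      obtain \<alpha> where \<alpha>: "\<alpha> \<in> M" and tc: "t \<in> colocal owner \<alpha> S\<phi>" using t by (auto simp: T_def)
      define A where "A = party_qubits owner Q \<alpha>"
      have tS: "t \<in> S\<phi>" using tc by (simp add: colocal_def)
      have van: "\<forall>j\<in>A. t j = (0,0)" using tc by (auto simp: A_def colocal_def party_qubits_def)
      have pt: "pauli_on Q2 t" using tS Sd by blast
      have e: "\<epsilon> t = 1 \<or> \<epsilon> t = -1" using eps tS by auto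
      have sPsi: "pauli_apply Q t \<Psi> = (\<lambda>x. \<epsilon> t * \<Psi> x)"
        unfolding Q_def \<Psi>_def pauli_tensor[OF fin1 fin2 dis pt] using eps tS
        by (auto simp: tensor_vec_def fun_eq_iff)
      have "tr_pauli Q t \<rho> = tr_pauli (Q - A) t (ptrace Q A \<rho>)" by (rule tr_pauli_ptrace[OF finQ van])
      also have "\<dots> = tr_pauli (Q - A) t (ptrace Q A (proj \<Psi>))" using marg \<alpha> by (simp add: A_def)
      also have "\<dots> = tr_pauli Q t (proj \<Psi>)" by (rule tr_pauli_ptrace[OF finQ van, symmetric])
      also have "\<dots> = \<epsilon> t" by (rule tr_pauli_proj[OF uPsi sPsi])
      finally show ?thesis by (rule stab_from_tr[OF finQ den e])
    qed
    define Cf where "Cf x1 y = (\<Sum>w\<in>qbasis Q2. cnj (\<phi> w) * \<rho> (merge x1 w) y)" for x1 y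
    have slice: "\<rho> (merge x1 z) y = Cf x1 y * \<phi> z" if x1: "x1 \<in> qbasis Q1" and z: "z \<in> qbasis Q2" for x1 z y
    proof -
      define s where "s z = (if z \<in> qbasis Q2 then \<rho> (merge x1 z) y else 0)" for z
      have sv: "is_vec Q2 s" by (simp add: s_def is_vec_def)
      have sst: "\<forall>t\<in>T. pauli_apply Q2 t s = (\<lambda>x. \<epsilon> t * s x)"
      proof (intro ballI ext)
        fix t z assume t: "t \<in> T"
        have pt: "pauli_on Q2 t" using t TS Sd by blast
        have van1: "\<forall>j\<in>Q1. t j = (0,0)" using pt dis by (auto simp: pauli_on_def)
        show "pauli_apply Q2 t s z = \<epsilon> t * s z"
        proof (cases "z \<in> qbasis Q2")
          case True
          have "pauli_apply Q t (\<lambda>x. \<rho> x y) (merge z x1) = pauli_apply Q2 t (\<lambda>x'. \<rho> (merge x' x1) y) z"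
            unfolding Q_def by (rule pauli_apply_merge[OF fin1 fin2 dis van1 True x1])
          then have "pcoef Q2 t z * \<rho> (merge x1 (pflip Q2 t z)) y = \<epsilon> t * \<rho> (merge x1 z) y"
            using stab[OF t, of y] True by (simp add: pauli_apply_eq merge_commute[of x1])
          then show ?thesis using True by (simp add: pauli_apply_eq s_def pflip_in)
        next
          case False
          then show ?thesis by (simp add: pauli_apply_eq s_def)
        qed
      qed
      have "s z = (\<Sum>w\<in>qbasis Q2. cnj (\<phi> w) * s w) * \<phi> z"
        by (rule stab_unique[OF fin2 u2 eps TS Tgen sv sst])
      moreover have "(\<Sum>w\<in>qbasis Q2. cnj (\<phi> w) * s w) = Cf x1 y"
        unfolding Cf_def by (intro sum.cong refl) (simp add: s_def)
      ultimately show ?thesis using z by (simp add: s_def)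
    qed
    define D where "D x1 y1 = (\<Sum>w\<in>qbasis Q2. cnj (\<phi> w) * cnj (Cf y1 (merge x1 w)))" for x1 y1
    have prodf: "\<rho> (merge x1 z) (merge y1 z') = D x1 y1 * (\<phi> z * cnj (\<phi> z'))"
      if x1: "x1 \<in> qbasis Q1" and y1: "y1 \<in> qbasis Q1" and z: "z \<in> qbasis Q2" and z': "z' \<in> qbasis Q2"
      for x1 y1 z z'
    proof -
      have hh: "\<rho> (merge x1 w) (merge y1 z') = cnj (\<rho> (merge y1 z') (merge x1 w))" for w
        by (rule rho_herm[OF finQ den])
      have "Cf x1 (merge y1 z') = (\<Sum>w\<in>qbasis Q2. cnj (\<phi> w) * cnj (\<rho> (merge y1 z') (merge x1 w)))"
        unfolding Cf_def by (simp only: hh)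
      also have "\<dots> = (\<Sum>w\<in>qbasis Q2. cnj (\<phi> w) * cnj (Cf y1 (merge x1 w) * \<phi> z'))"
        by (intro sum.cong refl) (simp add: slice[OF y1 z'])
      also have "\<dots> = cnj (\<phi> z') * D x1 y1"
        by (simp add: D_def sum_distrib_left algebra_simps)
      finally show ?thesis using slice[OF x1 z] by (simp add: algebra_simps)
    qed
    define \<rho>' where "\<rho>' = ptrace Q Q2 \<rho>"
    have r'D: "\<rho>' x1 y1 = D x1 y1" if x1: "x1 \<in> qbasis Q1" and y1: "y1 \<in> qbasis Q1" for x1 y1
    proof -
      have "\<rho>' x1 y1 = (\<Sum>z\<in>qbasis Q2. \<rho> (merge x1 z) (merge y1 z))"
        using x1 y1 by (simp add: \<rho>'_def ptrace_def QQ2)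
      also have "\<dots> = D x1 y1 * (\<Sum>z\<in>qbasis Q2. \<phi> z * cnj (\<phi> z))"
        by (simp add: prodf[OF x1 y1] sum_distrib_left)
      finally show ?thesis using unit_sum[OF u2] by simp
    qed
    have op': "is_op Q1 \<rho>'" by (auto simp: is_op_def \<rho>'_def ptrace_def QQ2)
    have rt: "\<rho> = tensor_op Q1 Q2 \<rho>' (proj \<phi>)"
    proof (rule ext, rule ext)
      fix X Y
      show "\<rho> X Y = tensor_op Q1 Q2 \<rho>' (proj \<phi>) X Y"
      proof (cases "X \<in> qbasis Q \<and> Y \<in> qbasis Q")
        case True
        define x1 z y1 z' where "x1 = restr X Q1" and "z = restr X Q2" and "y1 = restr Y Q1" and "z' = restr Y Q2"
        have XY: "X = merge x1 z" "Y = merge y1 z'" using True merge_restr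
          by (auto simp: x1_def z_def y1_def z'_def Q_def)
        have ins: "x1 \<in> qbasis Q1" "z \<in> qbasis Q2" "y1 \<in> qbasis Q1" "z' \<in> qbasis Q2"
          by (auto simp: x1_def z_def y1_def z'_def restr_in)
        show ?thesis unfolding XY
          using ins by (simp add: tensor_op_merge[OF dis] prodf r'D proj_def)
      next
        case False
        then show ?thesis by (auto simp: opz tensor_op_def Q_def)
      qed
    qed
    have d': "density Q1 \<rho>'"
      by (rule dens_tensor_rev[OF dis u2 op']) (use den rt in \<open>simp add: Q_def\<close>)
    have m': "\<forall>\<alpha>\<in>M. ptrace Q1 (party_qubits owner Q1 \<alpha>) \<rho>' = ptrace Q1 (party_qubits owner Q1 \<alpha>) (proj \<psi>')"
    proof
      fix \<alpha> assume "\<alpha> \<in> M"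
      then have "ptrace (Q1 \<union> Q2) (party_qubits owner Q \<alpha>) (tensor_op Q1 Q2 \<rho>' (proj \<phi>)) =
          ptrace (Q1 \<union> Q2) (party_qubits owner Q \<alpha>) (tensor_op Q1 Q2 (proj \<psi>') (proj \<phi>))"
        using marg rt projPsi by (simp add: Q_def)
      then show "ptrace Q1 (party_qubits owner Q1 \<alpha>) \<rho>' = ptrace Q1 (party_qubits owner Q1 \<alpha>) (proj \<psi>')"
        by (simp add: marg_iff[OF dis u2] pq)
    qed
    have "\<rho>' \<in> Gamma owner M Q1 \<psi>'" using d' m' by (simp add: Gamma_def)
    then show ?thesis using rt by blast
  qed
  have bwd: "tensor_op Q1 Q2 \<rho>' (proj \<phi>) \<in> Gamma owner M Q \<Psi>" if rG: "\<rho>' \<in> Gamma owner M Q1 \<psi>'" for \<rho>'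
  proof -
    have d': "density Q1 \<rho>'" and m': "\<forall>\<alpha>\<in>M. ptrace Q1 (party_qubits owner Q1 \<alpha>) \<rho>' = ptrace Q1 (party_qubits owner Q1 \<alpha>) (proj \<psi>')"
      using rG by (auto simp: Gamma_def)
    have "density Q (tensor_op Q1 Q2 \<rho>' (proj \<phi>))" unfolding Q_def by (rule dens_tensor[OF dis u2 d'])
    moreover have "ptrace Q (party_qubits owner Q \<alpha>) (tensor_op Q1 Q2 \<rho>' (proj \<phi>)) =
             ptrace Q (party_qubits owner Q \<alpha>) (proj \<Psi>)" if "\<alpha> \<in> M" for \<alpha>
      unfolding projPsi Q_def using m' that by (simp add: marg_iff[OF dis u2] pq[unfolded Q_def])
    ultimately show ?thesis by (simp add: Gamma_def)
  qed
  show ?thesis unfolding Q_def[symmetric] \<Psi>_def[symmetric] using fwd bwd by blast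
qed


end
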